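(* Let $\mathcal A,\mathcal B,\mathcal C,\mathcal D$ be collections and $\alpha$ an ordinal. Suppose that for each $\xi<\alpha$ there are functions $\overleftarrow T_{\mathrm I,\xi}:\mathcal B\to\mathcal A$ and $\overrightarrow T_{\mathrm{II},\xi}:(\bigcup\mathcal A)\times\mathcal B\to\bigcup\mathcal B$ such that (Tr1) if $x\in\overleftarrow T_{\mathrm I,\xi}(B)$ then $\overrightarrow T_{\mathrm{II},\xi}(x,B)\in B$; and (Tr2) if $x_\xi\in\overleftarrow T_{\mathrm I,\xi}(B_\xi)$ for all $\xi<\alpha$ and $\{x_\xi:\xi<\alpha\}\in\mathcal C$, then $\{\overrightarrow T_{\mathrm{II},\xi}(x_\xi,B_\xi):\xi<\alpha\}\in\mathcal D$. Then $G^\alpha_1(\mathcal A,\mathcal C)\le_{\mathrm{II}}G^\alpha_1(\mathcal B,\mathcal D)$.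
   Context: In the game $G^\alpha_1(\mathcal E,\mathcal F)$, at each stage $\xi<\alpha$ One plays $E_\xi\in\mathcal E$ and Two picks $x_\xi\in E_\xi$; Two wins iff $\{x_\xi:\xi<\alpha\}\in\mathcal F$, otherwise One wins. A strategy for One is a function $\sigma:(\bigcup\mathcal E)^{<\alpha}\to\mathcal E$ (from the sequence of Two's previous moves); it is predetermined if it depends only on the stage $\xi$. A strategy for Two is a function $\tau:\mathcal E^{<\alpha}\to\bigcup\mathcal E$ choosing an element of One's latest move; it is Markov if it is a function $\mathcal E\times\alpha\to\bigcup\mathcal E$ of One's latest move and the stage. A strategy is winning if its player wins every play following it. $G\le_{\mathrm{II}}H$ means: (1) if Two has a winning Markov strategy in $G$ then Two has one in $H$; (2) if Two has a winning strategy in $G$ then Two has one in $H$; (3) if One has no winning strategy in $G$ then One has none in $H$; (4) if One has no winning predetermined strategy in $G$ then One has none in $H$. *)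

theory Defs
  imports "HOL-Library.FuncSet"
begin

text \<open>The ordinal alpha is represented by a set I of stages inside a well-ordered
type 'i; the stages xi < alpha are the elements of I, ordered by the well-order.\<close>

definition before :: "'i::wellorder set \<Rightarrow> 'i \<Rightarrow> 'i set" where
  "before I \<xi> = {\<eta>\<in>I. \<eta> < \<xi>}"

definition upto :: "'i::wellorder set \<Rightarrow> 'i \<Rightarrow> 'i set" where
  "upto I \<xi> = {\<eta>\<in>I. \<eta> \<le> \<xi>}"

definition one_strategy :: "'i::wellorder set \<Rightarrow> 'a set set \<Rightarrow> ('i \<Rightarrow> ('i \<Rightarrow> 'a) \<Rightarrow> 'a set) \<Rightarrow> bool" where
  "one_strategy I \<E> \<sigma> \<longleftrightarrow> (\<forall>\<xi>\<in>I. \<forall>h. \<sigma> \<xi> (restrict h (before I \<xi>)) \<in> \<E>)"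

definition follows_one :: "'i::wellorder set \<Rightarrow> ('i \<Rightarrow> ('i \<Rightarrow> 'a) \<Rightarrow> 'a set) \<Rightarrow> ('i \<Rightarrow> 'a) \<Rightarrow> bool" where
  "follows_one I \<sigma> x \<longleftrightarrow> (\<forall>\<xi>\<in>I. x \<xi> \<in> \<sigma> \<xi> (restrict x (before I \<xi>)))"

definition one_winning :: "'i::wellorder set \<Rightarrow> 'a set set \<Rightarrow> 'a set set \<Rightarrow> ('i \<Rightarrow> ('i \<Rightarrow> 'a) \<Rightarrow> 'a set) \<Rightarrow> bool" where
  "one_winning I \<E> \<F> \<sigma> \<longleftrightarrow> one_strategy I \<E> \<sigma> \<and>
     (\<forall>x. follows_one I \<sigma> x \<longrightarrow> x ` I \<notin> \<F>)"

definition one_has_winning :: "'i::wellorder set \<Rightarrow> 'a set set \<Rightarrow> 'a set set \<Rightarrow> bool" where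
  "one_has_winning I \<E> \<F> \<longleftrightarrow> (\<exists>\<sigma>. one_winning I \<E> \<F> \<sigma>)"

definition one_has_winning_predetermined :: "'i::wellorder set \<Rightarrow> 'a set set \<Rightarrow> 'a set set \<Rightarrow> bool" where
  "one_has_winning_predetermined I \<E> \<F> \<longleftrightarrow> (\<exists>\<sigma> :: 'i \<Rightarrow> 'a set.
     (\<forall>\<xi>\<in>I. \<sigma> \<xi> \<in> \<E>) \<and> (\<forall>x. (\<forall>\<xi>\<in>I. x \<xi> \<in> \<sigma> \<xi>) \<longrightarrow> x ` I \<notin> \<F>))"

definition two_strategy :: "'i::wellorder set \<Rightarrow> 'a set set \<Rightarrow> ('i \<Rightarrow> ('i \<Rightarrow> 'a set) \<Rightarrow> 'a) \<Rightarrow> bool" where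
  "two_strategy I \<E> \<tau> \<longleftrightarrow> (\<forall>\<xi>\<in>I. \<forall>E. (\<forall>\<eta>\<in>upto I \<xi>. E \<eta> \<in> \<E>) \<longrightarrow>
     \<tau> \<xi> (restrict E (upto I \<xi>)) \<in> E \<xi>)"

definition two_has_winning :: "'i::wellorder set \<Rightarrow> 'a set set \<Rightarrow> 'a set set \<Rightarrow> bool" where
  "two_has_winning I \<E> \<F> \<longleftrightarrow> (\<exists>\<tau>. two_strategy I \<E> \<tau> \<and>
     (\<forall>E. (\<forall>\<xi>\<in>I. E \<xi> \<in> \<E>) \<longrightarrow> (\<lambda>\<xi>. \<tau> \<xi> (restrict E (upto I \<xi>))) ` I \<in> \<F>))"

definition two_has_winning_markov :: "'i::wellorder set \<Rightarrow> 'a set set \<Rightarrow> 'a set set \<Rightarrow> bool" where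
  "two_has_winning_markov I \<E> \<F> \<longleftrightarrow> (\<exists>\<tau> :: 'a set \<Rightarrow> 'i \<Rightarrow> 'a.
     (\<forall>E\<in>\<E>. \<forall>\<xi>\<in>I. \<tau> E \<xi> \<in> E) \<and>
     (\<forall>E. (\<forall>\<xi>\<in>I. E \<xi> \<in> \<E>) \<longrightarrow> (\<lambda>\<xi>. \<tau> (E \<xi>) \<xi>) ` I \<in> \<F>))"

definition le_II :: "'i::wellorder set \<Rightarrow> 'a set set \<Rightarrow> 'a set set \<Rightarrow> 'b set set \<Rightarrow> 'b set set \<Rightarrow> bool" where
  "le_II I \<E> \<F> \<E>' \<F>' \<longleftrightarrow>
     (two_has_winning_markov I \<E> \<F> \<longrightarrow> two_has_winning_markov I \<E>' \<F>') \<and>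
     (two_has_winning I \<E> \<F> \<longrightarrow> two_has_winning I \<E>' \<F>') \<and>
     (\<not> one_has_winning I \<E> \<F> \<longrightarrow> \<not> one_has_winning I \<E>' \<F>') \<and>
     (\<not> one_has_winning_predetermined I \<E> \<F> \<longrightarrow> \<not> one_has_winning_predetermined I \<E>' \<F>')"

end

theory Submission
  imports Defs
begin

definition Yrec :: "'i::wellorder set \<Rightarrow> ('i \<Rightarrow> 'a \<Rightarrow> 'b set \<Rightarrow> 'b) \<Rightarrow> ('i \<Rightarrow> ('i \<Rightarrow> 'b) \<Rightarrow> 'b set) \<Rightarrow> ('i \<Rightarrow> 'a) \<Rightarrow> 'i \<Rightarrow> 'b" where
  "Yrec I TII s x = wfrec {(a,b). a < b} (\<lambda>f \<eta>. TII \<eta> (x \<eta>) (s \<eta> (restrict f (before I \<eta>))))"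

lemma Yrec_eq: fixes I :: "'i::wellorder set" shows "Yrec I TII s x \<eta> = TII \<eta> (x \<eta>) (s \<eta> (restrict (Yrec I TII s x) (before I \<eta>)))"
proof -
  have wf: "wf {(a::'i, b). a < b}" using wf by (simp add: wf_def)
  have "Yrec I TII s x \<eta> = TII \<eta> (x \<eta>) (s \<eta> (restrict (cut (Yrec I TII s x) {(a,b). a < b} \<eta>) (before I \<eta>)))"
    unfolding Yrec_def by (subst wfrec[OF wf]) simp
  moreover have "restrict (cut (Yrec I TII s x) {(a,b). a < b} \<eta>) (before I \<eta>) = restrict (Yrec I TII s x) (before I \<eta>)"
    by (rule ext) (auto simp: cut_def before_def restrict_def)
  ultimately show ?thesis by simp
qed

lemma Yrec_restrict: fixes I :: "'i::wellorder set" shows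
  "\<eta> \<in> I \<Longrightarrow> \<eta> < \<xi> \<Longrightarrow> Yrec I TII s (restrict x (before I \<xi>)) \<eta> = Yrec I TII s x \<eta>"
proof (induction \<eta> rule: less_induct)
  case (less \<eta>)
  have "restrict (Yrec I TII s (restrict x (before I \<xi>))) (before I \<eta>) = restrict (Yrec I TII s x) (before I \<eta>)"
    using less.IH less.prems by (intro ext) (auto simp: restrict_def before_def)
  moreover have "restrict x (before I \<xi>) \<eta> = x \<eta>" using less.prems by (simp add: before_def)
  ultimately show ?case by (subst (1 2) Yrec_eq) simp
qed

theorem mainTheorem7:
  fixes I :: "'i::wellorder set"
    and \<A> \<C> :: "'a set set" and \<B> \<D> :: "'b set set"
    and TI :: "'i \<Rightarrow> 'b set \<Rightarrow> 'a set"
    and TII :: "'i \<Rightarrow> 'a \<Rightarrow> 'b set \<Rightarrow> 'b"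
  assumes TI_maps: "\<And>\<xi> B. \<xi> \<in> I \<Longrightarrow> B \<in> \<B> \<Longrightarrow> TI \<xi> B \<in> \<A>"
    and TII_maps: "\<And>\<xi> x B. \<xi> \<in> I \<Longrightarrow> x \<in> \<Union>\<A> \<Longrightarrow> B \<in> \<B> \<Longrightarrow> TII \<xi> x B \<in> \<Union>\<B>"
    and Tr1: "\<And>\<xi> x B. \<xi> \<in> I \<Longrightarrow> B \<in> \<B> \<Longrightarrow> x \<in> TI \<xi> B \<Longrightarrow> TII \<xi> x B \<in> B"
    and Tr2: "\<And>x B. (\<forall>\<xi>\<in>I. B \<xi> \<in> \<B> \<and> x \<xi> \<in> TI \<xi> (B \<xi>)) \<Longrightarrow> x ` I \<in> \<C> \<Longrightarrow>
               (\<lambda>\<xi>. TII \<xi> (x \<xi>) (B \<xi>)) ` I \<in> \<D>"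
  shows "le_II I \<A> \<C> \<B> \<D>"
  unfolding le_II_def
proof (intro conjI impI)
  assume "two_has_winning_markov I \<A> \<C>"
  then obtain \<tau> :: "'a set \<Rightarrow> 'i \<Rightarrow> 'a" where t1: "\<forall>E\<in>\<A>. \<forall>\<xi>\<in>I. \<tau> E \<xi> \<in> E"
    and t2: "\<forall>E. (\<forall>\<xi>\<in>I. E \<xi> \<in> \<A>) \<longrightarrow> (\<lambda>\<xi>. \<tau> (E \<xi>) \<xi>) ` I \<in> \<C>"
    unfolding two_has_winning_markov_def by blast
  show "two_has_winning_markov I \<B> \<D>"
    unfolding two_has_winning_markov_def
  proof (intro exI[of _ "\<lambda>B \<xi>. TII \<xi> (\<tau> (TI \<xi> B) \<xi>) B"] conjI allI impI ballI)
    fix B \<xi> assume "B \<in> \<B>" "\<xi> \<in> I"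
    then have "TI \<xi> B \<in> \<A>" using TI_maps by simp
    then have "\<tau> (TI \<xi> B) \<xi> \<in> TI \<xi> B" using t1 \<open>\<xi> \<in> I\<close> by simp
    then show "TII \<xi> (\<tau> (TI \<xi> B) \<xi>) B \<in> B" using Tr1 \<open>\<xi> \<in> I\<close> \<open>B \<in> \<B>\<close> by simp
  next
    fix E assume E: "\<forall>\<xi>\<in>I. E \<xi> \<in> \<B>"
    have "(\<lambda>\<xi>. \<tau> (TI \<xi> (E \<xi>)) \<xi>) ` I \<in> \<C>"
      using t2[rule_format, of "\<lambda>\<xi>. TI \<xi> (E \<xi>)"] E TI_maps by simp
    moreover have "\<forall>\<xi>\<in>I. E \<xi> \<in> \<B> \<and> \<tau> (TI \<xi> (E \<xi>)) \<xi> \<in> TI \<xi> (E \<xi>)"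
      using E TI_maps t1 by simp
    ultimately show "(\<lambda>\<xi>. TII \<xi> (\<tau> (TI \<xi> (E \<xi>)) \<xi>) (E \<xi>)) ` I \<in> \<D>"
      using Tr2[of E "\<lambda>\<xi>. \<tau> (TI \<xi> (E \<xi>)) \<xi>"] by simp
  qed
next
  assume "two_has_winning I \<A> \<C>"
  then obtain \<tau> where t1: "two_strategy I \<A> \<tau>"
    and t2: "\<forall>E. (\<forall>\<xi>\<in>I. E \<xi> \<in> \<A>) \<longrightarrow> (\<lambda>\<xi>. \<tau> \<xi> (restrict E (upto I \<xi>))) ` I \<in> \<C>"
    unfolding two_has_winning_def by blast
  define \<tau>' where "\<tau>' = (\<lambda>\<xi> h. TII \<xi> (\<tau> \<xi> (restrict (\<lambda>\<eta>. TI \<eta> (h \<eta>)) (upto I \<xi>))) (h \<xi>))"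
  have conv: "restrict (\<lambda>\<eta>. TI \<eta> (restrict E (upto I \<xi>) \<eta>)) (upto I \<xi>) = restrict (\<lambda>\<eta>. TI \<eta> (E \<eta>)) (upto I \<xi>)" for E \<xi>
    by (rule ext) (auto simp: restrict_def)
  have self: "\<xi> \<in> I \<Longrightarrow> restrict E (upto I \<xi>) \<xi> = E \<xi>" for E \<xi> by (simp add: upto_def)
  have key: "\<tau>' \<xi> (restrict E (upto I \<xi>)) = TII \<xi> (\<tau> \<xi> (restrict (\<lambda>\<eta>. TI \<eta> (E \<eta>)) (upto I \<xi>))) (E \<xi>)"
    if "\<xi> \<in> I" for E \<xi> unfolding \<tau>'_def conv self[OF that] by (rule refl)
  have mem: "\<tau> \<xi> (restrict (\<lambda>\<eta>. TI \<eta> (E \<eta>)) (upto I \<xi>)) \<in> TI \<xi> (E \<xi>)"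
    if "\<xi> \<in> I" "\<forall>\<eta>\<in>upto I \<xi>. E \<eta> \<in> \<B>" for E \<xi>
  proof -
    have "\<forall>\<eta>\<in>upto I \<xi>. TI \<eta> (E \<eta>) \<in> \<A>" using that TI_maps by (auto simp: upto_def)
    then show ?thesis using t1 that unfolding two_strategy_def by fastforce
  qed
  show "two_has_winning I \<B> \<D>"
    unfolding two_has_winning_def
  proof (intro exI[of _ \<tau>'] conjI allI impI)
    show "two_strategy I \<B> \<tau>'" unfolding two_strategy_def
    proof (intro ballI allI impI)
      fix \<xi> E assume a: "\<xi> \<in> I" "\<forall>\<eta>\<in>upto I \<xi>. E \<eta> \<in> \<B>"
      have "E \<xi> \<in> \<B>" using a by (auto simp: upto_def)
      then show "\<tau>' \<xi> (restrict E (upto I \<xi>)) \<in> E \<xi>"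
        using key[OF a(1)] mem[OF a] Tr1 a(1) by simp
    qed
  next
    fix E assume E: "\<forall>\<xi>\<in>I. E \<xi> \<in> \<B>"
    have "(\<lambda>\<xi>. \<tau> \<xi> (restrict (\<lambda>\<eta>. TI \<eta> (E \<eta>)) (upto I \<xi>))) ` I \<in> \<C>"
      using t2[rule_format, of "\<lambda>\<eta>. TI \<eta> (E \<eta>)"] E TI_maps by blast
    moreover have "\<forall>\<xi>\<in>I. E \<xi> \<in> \<B> \<and> \<tau> \<xi> (restrict (\<lambda>\<eta>. TI \<eta> (E \<eta>)) (upto I \<xi>)) \<in> TI \<xi> (E \<xi>)"
      using E mem by (auto simp: upto_def)
    ultimately have "(\<lambda>\<xi>. TII \<xi> (\<tau> \<xi> (restrict (\<lambda>\<eta>. TI \<eta> (E \<eta>)) (upto I \<xi>))) (E \<xi>)) ` I \<in> \<D>"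
      using Tr2[of E "\<lambda>\<xi>. \<tau> \<xi> (restrict (\<lambda>\<eta>. TI \<eta> (E \<eta>)) (upto I \<xi>))"] by blast
    moreover have "(\<lambda>\<xi>. \<tau>' \<xi> (restrict E (upto I \<xi>))) ` I = (\<lambda>\<xi>. TII \<xi> (\<tau> \<xi> (restrict (\<lambda>\<eta>. TI \<eta> (E \<eta>)) (upto I \<xi>))) (E \<xi>)) ` I"
      using key by (intro image_cong) auto
    ultimately show "(\<lambda>\<xi>. \<tau>' \<xi> (restrict E (upto I \<xi>))) ` I \<in> \<D>" by simp
  qed
next
  assume nA: "\<not> one_has_winning I \<A> \<C>"
  show "\<not> one_has_winning I \<B> \<D>"
  proof
    assume "one_has_winning I \<B> \<D>"
    then obtain s where s1: "one_strategy I \<B> s" and s2: "\<forall>x. follows_one I s x \<longrightarrow> x ` I \<notin> \<D>"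
      unfolding one_has_winning_def one_winning_def by blast
    define \<sigma> where "\<sigma> = (\<lambda>\<xi> h. TI \<xi> (s \<xi> (restrict (Yrec I TII s h) (before I \<xi>))))"
    have sB: "\<xi> \<in> I \<Longrightarrow> s \<xi> (restrict h (before I \<xi>)) \<in> \<B>" for \<xi> h
      using s1 unfolding one_strategy_def by blast
    have rr: "restrict (Yrec I TII s (restrict x (before I \<xi>))) (before I \<xi>) = restrict (Yrec I TII s x) (before I \<xi>)" for x \<xi>
      using Yrec_restrict[where I=I and \<xi>=\<xi> and TII=TII and s=s and x=x] by (intro ext) (auto simp: before_def)
    have "one_winning I \<A> \<C> \<sigma>"
      unfolding one_winning_def
    proof (intro conjI allI impI)
      show "one_strategy I \<A> \<sigma>" unfolding one_strategy_def \<sigma>_def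
        using sB TI_maps by blast
    next
      fix x assume fx: "follows_one I \<sigma> x"
      define y where "y = Yrec I TII s x"
      define B where "B = (\<lambda>\<xi>. s \<xi> (restrict y (before I \<xi>)))"
      have xin: "\<forall>\<xi>\<in>I. B \<xi> \<in> \<B> \<and> x \<xi> \<in> TI \<xi> (B \<xi>)"
        using fx sB unfolding follows_one_def \<sigma>_def B_def y_def rr by blast
      have yeq: "y \<xi> = TII \<xi> (x \<xi>) (B \<xi>)" for \<xi>
        unfolding y_def B_def by (rule Yrec_eq)
      have "follows_one I s y" unfolding follows_one_def
        using xin Tr1 yeq B_def by metis
      then have "y ` I \<notin> \<D>" using s2 by blast
      moreover have "y ` I = (\<lambda>\<xi>. TII \<xi> (x \<xi>) (B \<xi>)) ` I" using yeq by auto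
      ultimately show "x ` I \<notin> \<C>" using Tr2[OF xin] by auto
    qed
    then show False using nA unfolding one_has_winning_def by blast
  qed
next
  assume nA: "\<not> one_has_winning_predetermined I \<A> \<C>"
  show "\<not> one_has_winning_predetermined I \<B> \<D>"
  proof
    assume "one_has_winning_predetermined I \<B> \<D>"
    then obtain s :: "'i \<Rightarrow> 'b set" where s1: "\<forall>\<xi>\<in>I. s \<xi> \<in> \<B>"
      and s2: "\<forall>x. (\<forall>\<xi>\<in>I. x \<xi> \<in> s \<xi>) \<longrightarrow> x ` I \<notin> \<D>"
      unfolding one_has_winning_predetermined_def by blast
    have "\<forall>\<xi>\<in>I. TI \<xi> (s \<xi>) \<in> \<A>" using s1 TI_maps by blast
    moreover have "\<forall>x. (\<forall>\<xi>\<in>I. x \<xi> \<in> TI \<xi> (s \<xi>)) \<longrightarrow> x ` I \<notin> \<C>"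
    proof (intro allI impI notI)
      fix x assume a: "\<forall>\<xi>\<in>I. x \<xi> \<in> TI \<xi> (s \<xi>)" "x ` I \<in> \<C>"
      have "(\<lambda>\<xi>. TII \<xi> (x \<xi>) (s \<xi>)) ` I \<in> \<D>" using Tr2[of s x] a s1 by blast
      moreover have "\<forall>\<xi>\<in>I. TII \<xi> (x \<xi>) (s \<xi>) \<in> s \<xi>" using Tr1 a s1 by blast
      ultimately show False using s2[rule_format, of "\<lambda>\<xi>. TII \<xi> (x \<xi>) (s \<xi>)"] by blast
    qed
    ultimately show False using nA[unfolded one_has_winning_predetermined_def, simplified not_ex, rule_format, of "\<lambda>\<xi>. TI \<xi> (s \<xi>)"] unfolding one_has_winning_predetermined_def by (metis (no_types, lifting))
  qed
qed

end
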